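(* Let $A$ be a positive $2\times 2$ row stochastic matrix that is not column stochastic. If the column scaled matrix $A\,Y(A)$ is doubly stochastic, then $A=\begin{pmatrix} a & 1-a\\ a & 1-a\end{pmatrix}$ for some $a\in(0,1)$ with $a\neq 1/2$, and $S(A)=A\,Y(A)=\begin{pmatrix} 1/2 & 1/2\\ 1/2 & 1/2\end{pmatrix}$. Let $A$ be a positive $2\times 2$ column stochastic matrix that is not row stochastic. If the row scaled matrix $X(A)\,A$ is doubly stochastic, then $A=\begin{pmatrix} a & a\\ 1-a & 1-a\end{pmatrix}$ for some $a\in(0,1)$ with $a\neq 1/2$, and $S(A)=X(A)\,A=\begin{pmatrix} 1/2 & 1/2\\ 1/2 & 1/2\end{pmatrix}$.
   Context: A positive matrix has all entries positive. For an $n\times n$ matrix $A=(a_{i,j})$ let $\mathrm{row}_i(A)=\sum_j a_{i,j}$ and $\mathrm{col}_j(A)=\sum_i a_{i,j}$. $A$ is row stochastic if all row sums equal $1$, column stochastic if all column sums equal $1$, and doubly stochastic if both. For positive $A$ let $X(A)=\mathrm{diag}(1/\mathrm{row}_1(A),\ldots,1/\mathrm{row}_n(A))$ and $Y(A)=\mathrm{diag}(1/\mathrm{col}_1(A),\ldots,1/\mathrm{col}_n(A))$. $S(A)$ denotes the alternate minimization limit of $A$: the limit of the sequence $A^{(0)}=A$, $A^{(2k+1)}=A^{(2k)}\,Y(A^{(2k)})$, $A^{(2k+2)}=X(A^{(2k+1)})\,A^{(2k+1)}$ ($k\ge 0$), which converges to a doubly stochastic matrix and which is unchanged if $A$ is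 replaced by $PAQ$ for positive diagonal $P,Q$. *)

theory Defs
  imports "HOL-Analysis.Analysis"
begin

definition positive_matrix :: "real^'n^'n \<Rightarrow> bool" where
  "positive_matrix A \<longleftrightarrow> (\<forall>i j. A $ i $ j > 0)"

definition row_sum :: "real^'n^'n \<Rightarrow> 'n \<Rightarrow> real" where
  "row_sum A i = (\<Sum>j\<in>UNIV. A $ i $ j)"

definition col_sum :: "real^'n^'n \<Rightarrow> 'n \<Rightarrow> real" where
  "col_sum A j = (\<Sum>i\<in>UNIV. A $ i $ j)"

definition row_stochastic :: "real^'n^'n \<Rightarrow> bool" where
  "row_stochastic A \<longleftrightarrow> (\<forall>i. row_sum A i = 1)"

definition col_stochastic :: "real^'n^'n \<Rightarrow> bool" where
  "col_stochastic A \<longleftrightarrow> (\<forall>j. col_sum A j = 1)"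

definition doubly_stochastic :: "real^'n^'n \<Rightarrow> bool" where
  "doubly_stochastic A \<longleftrightarrow> row_stochastic A \<and> col_stochastic A"

definition diag_mat :: "('n \<Rightarrow> real) \<Rightarrow> real^'n^'n" where
  "diag_mat d = (\<chi> i j. if i = j then d i else 0)"

definition Xm :: "real^'n^'n \<Rightarrow> real^'n^'n" where
  "Xm A = diag_mat (\<lambda>i. 1 / row_sum A i)"

definition Ym :: "real^'n^'n \<Rightarrow> real^'n^'n" where
  "Ym A = diag_mat (\<lambda>j. 1 / col_sum A j)"

fun alt_seq :: "real^'n^'n \<Rightarrow> nat \<Rightarrow> real^'n^'n" where
  "alt_seq A 0 = A"
| "alt_seq A (Suc m) =
     (if even m then alt_seq A m ** Ym (alt_seq A m)
      else Xm (alt_seq A m) ** alt_seq A m)"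

definition S_lim :: "real^'n^'n \<Rightarrow> real^'n^'n" where
  "S_lim A = lim (alt_seq A)"

end

theory Submission
  imports Defs
begin

lemma MY_entry: "(M ** Ym M) $ i $ j = M $ i $ j / col_sum M j"
  unfolding matrix_matrix_mult_def Ym_def diag_mat_def
  by (simp add: if_distrib cong: if_cong)

lemma XM_entry: "(Xm M ** M) $ i $ j = M $ i $ j / row_sum M i"
  unfolding matrix_matrix_mult_def Xm_def diag_mat_def
  by (simp add: if_distrib[of "\<lambda>x. x * _"] cong: if_cong)

definition Jh :: "real^2^2" where
  "Jh = vector [vector [1/2, 1/2], vector [1/2, 1/2]]"

lemma Jh_entry: "Jh $ i $ j = 1/2"
  unfolding Jh_def using exhaust_2[of i] exhaust_2[of j] by auto

lemma Jh_fix: "Jh ** Ym Jh = Jh" "Xm Jh ** Jh = Jh"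
  by (simp_all add: vec_eq_iff MY_entry XM_entry col_sum_def row_sum_def sum_2 Jh_entry)

lemma seq_Jh:
  assumes "alt_seq M 1 = Jh"
  shows "n \<ge> 1 \<Longrightarrow> alt_seq M n = Jh"
proof (induction n)
  case 0 then show ?case by simp
next
  case (Suc n)
  show ?case
  proof (cases "n = 0")
    case True then show ?thesis using assms by simp
  next
    case False
    then have "alt_seq M n = Jh" using Suc by simp
    then show ?thesis by (simp add: Jh_fix)
  qed
qed

lemma lim_Jh:
  assumes "alt_seq M 1 = Jh"
  shows "S_lim M = Jh"
proof -
  have "eventually (\<lambda>n. alt_seq M n = Jh) sequentially"
    by (rule eventually_sequentiallyI[of 1]) (rule seq_Jh[OF assms])
  then have "alt_seq M \<longlonglongrightarrow> Jh" by (rule tendsto_eventually)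
  then show ?thesis unfolding S_lim_def by (rule limI)
qed

lemma eq2: "(M::real^2^2) = N \<longleftrightarrow> M$1$1 = N$1$1 \<and> M$1$2 = N$1$2 \<and> M$2$1 = N$2$1 \<and> M$2$2 = N$2$2"
  by (auto simp: vec_eq_iff forall_2)

theorem theorem8:
  fixes A B :: "real^2^2"
  shows
  "(positive_matrix A \<and> row_stochastic A \<and> \<not> col_stochastic A \<and>
      doubly_stochastic (A ** Ym A)
    \<longrightarrow> (\<exists>a. 0 < a \<and> a < 1 \<and> a \<noteq> 1/2 \<and>
            A = vector [vector [a, 1 - a], vector [a, 1 - a]]) \<and>
        S_lim A = A ** Ym A \<and>
        A ** Ym A = vector [vector [1/2, 1/2], vector [1/2, 1/2]])
   \<and>
   (positive_matrix B \<and> col_stochastic B \<and> \<not> row_stochastic B \<and>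
      doubly_stochastic (Xm B ** B)
    \<longrightarrow> (\<exists>a. 0 < a \<and> a < 1 \<and> a \<noteq> 1/2 \<and>
            B = vector [vector [a, a], vector [1 - a, 1 - a]]) \<and>
        S_lim B = Xm B ** B \<and>
        Xm B ** B = vector [vector [1/2, 1/2], vector [1/2, 1/2]])"
proof (intro conjI impI)
  assume h: "positive_matrix A \<and> row_stochastic A \<and> \<not> col_stochastic A \<and>
      doubly_stochastic (A ** Ym A)"
  define p where "p = A$1$1"
  define q where "q = A$2$1"
  have pos: "A$1$1 > 0" "A$1$2 > 0" "A$2$1 > 0" "A$2$2 > 0"
    using h unfolding positive_matrix_def by auto
  have r: "A$1$2 = 1 - p" "A$2$2 = 1 - q"
    using h unfolding row_stochastic_def row_sum_def p_def q_def by (auto simp: sum_2 forall_2)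
  have nc: "p + q \<noteq> 1"
    using h r unfolding col_stochastic_def col_sum_def p_def q_def by (auto simp: sum_2 forall_2)
  have c1: "col_sum A 1 = p + q" and c2: "col_sum A 2 = 2 - p - q"
    using r unfolding col_sum_def p_def q_def by (auto simp: sum_2)
  have pp: "0 < p" "p < 1" "0 < q" "q < 1" using pos r p_def q_def by auto
  have e1: "p/(p+q) + (1-p)/(2-p-q) = 1" and e2: "q/(p+q) + (1-q)/(2-p-q) = 1"
    using h unfolding doubly_stochastic_def row_stochastic_def
    by (auto simp: forall_2 row_sum_def sum_2 MY_entry c1 c2 r p_def[symmetric] q_def[symmetric])
  have "p = q"
  proof -
    have d1: "p+q > 0" "2-p-q > 0" using pp by auto
    have "(p-q)*(1/(p+q) - 1/(2-p-q)) = (p/(p+q) + (1-p)/(2-p-q)) - (q/(p+q) + (1-q)/(2-p-q))"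
      by (simp add: algebra_simps diff_divide_distrib)
    also have "\<dots> = 0" using e1 e2 by simp
    finally have z: "(p-q)*(1/(p+q) - 1/(2-p-q)) = 0" .
    have "1/(p+q) \<noteq> 1/(2-p-q)" using nc d1 by (auto simp: divide_eq_eq)
    then show ?thesis using z by auto
  qed
  have AJ: "A ** Ym A = Jh"
    using pp \<open>p = q\<close> unfolding eq2
    by (simp add: MY_entry c1 c2 r p_def[symmetric] q_def[symmetric] Jh_entry field_simps)
  show "\<exists>a. 0 < a \<and> a < 1 \<and> a \<noteq> 1/2 \<and> A = vector [vector [a, 1 - a], vector [a, 1 - a]]"
    using pp \<open>p = q\<close> nc r unfolding eq2 by (intro exI[of _ p]) (auto simp: p_def q_def)
  show "S_lim A = A ** Ym A" using lim_Jh[of A] AJ by simp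
  show "A ** Ym A = vector [vector [1/2, 1/2], vector [1/2, 1/2]]" using AJ Jh_def by simp
next
  assume h: "positive_matrix B \<and> col_stochastic B \<and> \<not> row_stochastic B \<and>
      doubly_stochastic (Xm B ** B)"
  define p where "p = B$1$1"
  define q where "q = B$1$2"
  have pos: "B$1$1 > 0" "B$1$2 > 0" "B$2$1 > 0" "B$2$2 > 0"
    using h unfolding positive_matrix_def by auto
  have r: "B$2$1 = 1 - p" "B$2$2 = 1 - q"
    using h unfolding col_stochastic_def col_sum_def p_def q_def by (auto simp: sum_2 forall_2)
  have nc: "p + q \<noteq> 1"
    using h r unfolding row_stochastic_def row_sum_def p_def q_def by (auto simp: sum_2 forall_2)
  have c1: "row_sum B 1 = p + q" and c2: "row_sum B 2 = 2 - p - q"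
    using r unfolding row_sum_def p_def q_def by (auto simp: sum_2)
  have pp: "0 < p" "p < 1" "0 < q" "q < 1" using pos r p_def q_def by auto
  have e1: "p/(p+q) + (1-p)/(2-p-q) = 1" and e2: "q/(p+q) + (1-q)/(2-p-q) = 1"
    using h unfolding doubly_stochastic_def col_stochastic_def
    by (auto simp: forall_2 col_sum_def sum_2 XM_entry c1 c2 r p_def[symmetric] q_def[symmetric])
  have "p = q"
  proof -
    have d1: "p+q > 0" "2-p-q > 0" using pp by auto
    have "(p-q)*(1/(p+q) - 1/(2-p-q)) = (p/(p+q) + (1-p)/(2-p-q)) - (q/(p+q) + (1-q)/(2-p-q))"
      by (simp add: algebra_simps diff_divide_distrib)
    also have "\<dots> = 0" using e1 e2 by simp
    finally have z: "(p-q)*(1/(p+q) - 1/(2-p-q)) = 0" .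
    have "1/(p+q) \<noteq> 1/(2-p-q)" using nc d1 by (auto simp: divide_eq_eq)
    then show ?thesis using z by auto
  qed
  have B1: "B ** Ym B = B"
    using h unfolding eq2 col_stochastic_def by (simp add: MY_entry forall_2)
  have BJ: "Xm B ** B = Jh"
    using pp \<open>p = q\<close> unfolding eq2
    by (simp add: XM_entry c1 c2 r p_def[symmetric] q_def[symmetric] Jh_entry field_simps)
  have "alt_seq B 2 = Jh"
    using B1 BJ by (simp add: numeral_2_eq_2)
  have ss: "\<And>n. alt_seq B (Suc (Suc n)) = Jh"
  proof -
    fix n show "alt_seq B (Suc (Suc n)) = Jh"
  proof (induction n)
    case 0 then show ?case using \<open>alt_seq B 2 = Jh\<close> by (simp add: numeral_2_eq_2)
  next
    case (Suc n) then show ?case by (subst alt_seq.simps(2)) (simp add: Jh_fix del: alt_seq.simps(2))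
  qed
  qed
  have "eventually (\<lambda>n. alt_seq B n = Jh) sequentially"
  proof (rule eventually_sequentiallyI[of 2])
    fix n :: nat assume "2 \<le> n"
    then obtain m where "n = Suc (Suc m)" by (metis add_2_eq_Suc le_Suc_ex)
    then show "alt_seq B n = Jh" using ss[of m] by (simp del: alt_seq.simps)
  qed
  then have "alt_seq B \<longlonglongrightarrow> Jh" by (rule tendsto_eventually)
  then have SB: "S_lim B = Jh" unfolding S_lim_def by (rule limI)
  show "\<exists>a. 0 < a \<and> a < 1 \<and> a \<noteq> 1/2 \<and> B = vector [vector [a, a], vector [1 - a, 1 - a]]"
    using pp \<open>p = q\<close> nc r unfolding eq2 by (intro exI[of _ p]) (auto simp: p_def q_def)
  show "S_lim B = Xm B ** B" using SB BJ by simp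
  show "Xm B ** B = vector [vector [1/2, 1/2], vector [1/2, 1/2]]" using BJ Jh_def by simp
qed

end
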